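(* Let $F=\{1,2,3,5,8,\dots\}$ be the set of positive Fibonacci numbers. There exists a $4$-coloring of $\mathbb{N}$ admitting no monochromatic $4$-term $F$-diffsequence. In particular $F$ is not $4$-accessible, i.e. $\operatorname{doa}(F)\le 3$.
   Context: For $D\subseteq\mathbb{N}$, a $k$-term $D$-diffsequence is a sequence of integers $x_1,\dots,x_k$ with $x_{i+1}-x_i\in D$ for all $1\le i\le k-1$. $D$ is $r$-accessible if every $r$-coloring $\chi:\mathbb{N}\to\{1,\dots,r\}$ admits monochromatic $k$-term $D$-diffsequences for every $k\ge1$; $\operatorname{doa}(D)$ is the greatest $r$ for which $D$ is $r$-accessible. *)

theory Defs
  imports Main "HOL-Number_Theory.Fib"
begin

text \<open>Natural numbers are the positive integers {1,2,3,...}; we use type nat and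
  restrict attention to positive values.\<close>

definition fib_set :: "nat set" where
  "fib_set = {fib n | n. n \<ge> 1}"

definition diffseq :: "nat set \<Rightarrow> nat \<Rightarrow> (nat \<Rightarrow> int) \<Rightarrow> bool" where
  "diffseq D k x \<longleftrightarrow> (\<forall>i. 1 \<le> i \<and> i \<le> k - 1 \<longrightarrow> (\<exists>d\<in>D. x (i + 1) - x i = int d))"

definition coloring :: "nat \<Rightarrow> (nat \<Rightarrow> nat) \<Rightarrow> bool" where
  "coloring r \<chi> \<longleftrightarrow> (\<forall>n\<ge>1. \<chi> n \<in> {1..r})"

definition mono_diffseq :: "(nat \<Rightarrow> nat) \<Rightarrow> nat set \<Rightarrow> nat \<Rightarrow> bool" where
  "mono_diffseq \<chi> D k \<longleftrightarrow> (\<exists>x. diffseq D k x \<and>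
      (\<forall>i. 1 \<le> i \<and> i \<le> k \<longrightarrow> x i \<ge> 1) \<and>
      (\<exists>c. \<forall>i. 1 \<le> i \<and> i \<le> k \<longrightarrow> \<chi> (nat (x i)) = c))"

definition accessible :: "nat \<Rightarrow> nat set \<Rightarrow> bool" where
  "accessible r D \<longleftrightarrow> (\<forall>\<chi>. coloring r \<chi> \<longrightarrow> (\<forall>k\<ge>1. mono_diffseq \<chi> D k))"

end

theory Submission
  imports Defs
begin

definition psi :: real where "psi = (1 - sqrt 5) / 2"

lemma sqrt5_bounds: "2.2 < sqrt (5::real)" "sqrt (5::real) < 2.3"
proof -
  have "(2.2::real) = sqrt (2.2^2)" by simp
  also have "\<dots> < sqrt 5" by (subst real_sqrt_less_iff) (simp add: power2_eq_square)
  finally show "2.2 < sqrt (5::real)" .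
  have "sqrt (5::real) < sqrt (2.3^2)" by (subst real_sqrt_less_iff) (simp add: power2_eq_square)
  also have "\<dots> = 2.3" by simp
  finally show "sqrt (5::real) < 2.3" .
qed

lemma psi_sq: "psi^2 = psi + 1"
  unfolding psi_def by (simp add: power2_eq_square field_simps)

lemma psi_bounds: "-1 < psi" "psi < 0"
  using sqrt5_bounds unfolding psi_def by auto

lemma fib_psi_pair:
  "real (fib (j+1)) * (-psi) = real (fib j) - psi^(j+1) \<and>
   real (fib (j+2)) * (-psi) = real (fib (j+1)) - psi^(j+2)"
proof (induction j)
  case 0
  have "psi^2 = psi + 1" by (rule psi_sq)
  then show ?case by (simp add: numeral_2_eq_2)
next
  case (Suc j)
  have e: "psi^(j+3) = psi^(j+2) + psi^(j+1)"
  proof -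
    have "psi^(j+3) = psi^((j+1)+2)" using arg_cong[of "j+3" "(j+1)+2" "\<lambda>x. psi^x"] by linarith
    also have "\<dots> = psi^(j+1) * psi^2" by (rule power_add)
    also have "\<dots> = psi^(j+1) * (psi + 1)" by (simp add: psi_sq)
    also have "\<dots> = psi^(j+1) * psi + psi^(j+1)" by (simp add: algebra_simps)
    also have "psi^(j+1) * psi = psi^(j+2)"
      using power_add[of psi "j+1" 1] arg_cong[of "j+1+1" "j+2" "\<lambda>x. psi^x"] by simp
    finally show ?thesis .
  qed
  have f: "fib (j+3) = fib (j+2) + fib (j+1)"
    by (simp add: numeral_3_eq_3 numeral_2_eq_2)
  have f2: "fib (j+2) = fib (j+1) + fib j" by (simp add: numeral_2_eq_2)
  have A: "real (fib (j+1)) * (-psi) = real (fib j) - psi^(j+1)"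
   and B: "real (fib (j+2)) * (-psi) = real (fib (j+1)) - psi^(j+2)" using Suc.IH by blast+
  have F: "real (fib (j+3)) = real (fib (j+2)) + real (fib (j+1))" using f by simp
  have F2: "real (fib (j+2)) = real (fib (j+1)) + real (fib j)" using f2 by simp
  have G: "real (fib (j+3)) * (-psi) = real (fib (j+2)) * (-psi) + real (fib (j+1)) * (-psi)"
    unfolding F by (rule distrib_right)
  have C: "real (fib (j+3)) * (-psi) = real (fib (j+2)) - psi^(j+3)"
    using G A B F2 e by linarith
  have eqs: "j + 1 + 1 = j + 2" "j + 1 + 2 = j + 3" "Suc j = j + 1" by simp_all
  show ?case unfolding eqs using B C by blast
qed

lemma fib_psi: "real (fib (j+1)) * (-psi) = real (fib j) - psi^(j+1)"
  using fib_psi_pair by blast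

lemma key: 
  fixes a a' b b' :: nat
  assumes "a<2" "a'<2" "1 + a + 2*b = 1 + a' + 2*b'" shows "a = a' \<and> b = b'"
proof -
  have "(a + 2*b) mod 2 = (a' + 2*b') mod 2" using assms(3) by simp
  then have "a mod 2 = a' mod 2" by simp
  then have "a = a'" using assms(1,2) by simp
  then show ?thesis using assms(3) by simp
qed

lemma fib_mod4:
  "fib n mod 4 = (if n mod 6 = 0 then 0 else if n mod 6 = 3 then 2
                  else if n mod 6 = 4 then 3 else 1)"
proof (induction n rule: fib.induct)
  case 1 then show ?case by simp
next
  case 2 then show ?case by simp
next
  case (3 n)
  have r: "fib (Suc (Suc n)) mod 4 = (fib (Suc n) mod 4 + fib n mod 4) mod 4"
    by (simp add: mod_add_eq)
  have s1: "Suc n mod 6 = (if n mod 6 = 5 then 0 else n mod 6 + 1)"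
    by (simp add: mod_Suc)
  have s2: "Suc (Suc n) mod 6 = (if n mod 6 = 4 then 0 else if n mod 6 = 5 then 1 else n mod 6 + 2)"
    by (simp add: mod_Suc)
  have c6: "n mod 6 = 0 \<or> n mod 6 = 1 \<or> n mod 6 = 2 \<or> n mod 6 = 3 \<or> n mod 6 = 4 \<or> n mod 6 = 5"
    by arith
  from c6 show ?case
  proof (elim disjE)
    assume h: "n mod 6 = 0"
    show ?thesis using "3.IH" r s1 s2 h by simp
  next
    assume h: "n mod 6 = 1"
    show ?thesis using "3.IH" r s1 s2 h by simp
  next
    assume h: "n mod 6 = 2"
    show ?thesis using "3.IH" r s1 s2 h by simp
  next
    assume h: "n mod 6 = 3"
    show ?thesis using "3.IH" r s1 s2 h by simp
  next
    assume h: "n mod 6 = 4"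
    show ?thesis using "3.IH" r s1 s2 h by simp
  next
    assume h: "n mod 6 = 5"
    show ?thesis using "3.IH" r s1 s2 h by simp
  qed
qed

definition th :: real where "th = - psi"
definition Hf :: "nat \<Rightarrow> int" where "Hf n = \<lfloor>real n * th\<rfloor>"
definition sf :: "nat \<Rightarrow> real" where "sf n = real n * th - of_int (Hf n)"
definition cc :: real where "cc = psi^6"

definition chi :: "nat \<Rightarrow> nat" where
  "chi n = 1 + n mod 2 + 2 * nat ((Hf n div 2) mod 2)"

lemma cc_bounds: "0 < cc" "cc < 1/3"
proof -
  show "0 < cc" unfolding cc_def using psi_bounds by simp
  have p3: "psi^3 = 2*psi+1"
  proof -
    have "psi^3 = psi*psi^2" by (simp add: power3_eq_cube power2_eq_square)
    also have "\<dots> = psi*(psi+1)" by (simp add: psi_sq)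
    also have "\<dots> = psi^2 + psi" by (simp add: power2_eq_square algebra_simps)
    also have "\<dots> = 2*psi+1" by (simp add: psi_sq)
    finally show ?thesis .
  qed
  have "psi^6 = 8*psi + 5"
  proof -
    have "psi^6 = (psi^3)^2" by (simp add: power_mult[symmetric])
    also have "\<dots> = 4*psi^2 + 4*psi + 1" by (simp add: p3 power2_eq_square algebra_simps)
    also have "\<dots> = 8*psi + 5" by (simp add: psi_sq)
    finally show ?thesis .
  qed
  then have "cc = 9 - 4 * sqrt 5" unfolding cc_def psi_def by simp
  then show "cc < 1/3" using sqrt5_bounds by linarith
qed

lemma sf_bounds: "0 \<le> sf n" "sf n < 1"
  unfolding sf_def Hf_def by linarith+

lemma g1: "\<And>n f::nat. n mod 2 = (n+f) mod 2 \<Longrightarrow> f mod 2 = 0" by presburger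
lemma g2: "\<And>k::nat. (if k mod 6 = 0 then 0 else if k mod 6 = 3 then 2 else if k mod 6 = 4 then 3 else (1::nat)) mod 2 = 0 \<Longrightarrow> k mod 6 = 0 \<or> k mod 6 = 3"
  by (auto split: if_splits)
lemma g3: "\<And>j::nat. (j+1) mod 6 = 0 \<or> (j+1) mod 6 = 3 \<Longrightarrow> j mod 6 = 5 \<or> j mod 6 = 2" by presburger
lemma g4: "\<And>f::nat. f mod 4 = 1 \<Longrightarrow> int f = 4 * int (f div 4) + 1" by presburger
lemma g5: "\<And>f::nat. f mod 2 = (f mod 4) mod 2" by (simp add: mod_mod_cancel)
lemma g6: "\<And>k::nat. k mod 6 = 0 \<Longrightarrow> k \<ge> 1 \<Longrightarrow> k \<ge> 6" by presburger
lemma g7: "\<And>k::nat. even k \<Longrightarrow> k mod 6 = 0 \<or> k mod 6 = 3 \<Longrightarrow> k mod 6 = 0" by presburger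
lemma g8: "\<And>H q::int. H' = H + 4*q + 2 \<Longrightarrow> (H div 2) mod 2 = (H' div 2) mod 2 \<Longrightarrow> False" by presburger
lemma g9: "\<And>H q::int. H' = H + 4*q + 1 \<Longrightarrow> (H div 2) mod 2 = (H' div 2) mod 2 \<Longrightarrow> H mod 2 = 0 \<and> H' mod 2 = 1" by presburger
lemma g10: "\<And>H q::int. H' = H + 4*q \<Longrightarrow> H' mod 2 = H mod 2" by presburger

lemma step:
  assumes k: "k \<ge> 1" and ch: "chi n = chi (n + fib k)"
  defines "m \<equiv> n + fib k"
  shows "(Hf m mod 2 = Hf n mod 2 \<and> sf n < cc \<and> sf m \<ge> 1 - cc) \<or>
         (Hf n mod 2 = 0 \<and> Hf m mod 2 = 1 \<and> sf m \<ge> sf n - cc)"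
proof -
  define j where "j = k - 1"
  have kj: "k = j + 1" using k unfolding j_def by simp
  have bb: "nat ((Hf x div 2) mod 2) \<le> 1" for x by simp
  have cheq: "n mod 2 = m mod 2 \<and> nat ((Hf n div 2) mod 2) = nat ((Hf m div 2) mod 2)"
    using key[OF _ _ ch[unfolded chi_def]] unfolding m_def by simp
  have par: "n mod 2 = m mod 2" using cheq by simp
  have fe: "fib k mod 2 = 0" using g1 par unfolding m_def by blast
  have f4k: "fib k mod 4 = (if k mod 6 = 0 then 0 else if k mod 6 = 3 then 2
                  else if k mod 6 = 4 then 3 else 1)" by (rule fib_mod4)
  have "(fib k mod 4) mod 2 = 0" using fe by (simp add: mod_mod_cancel)
  then have "(if k mod 6 = 0 then 0 else if k mod 6 = 3 then 2
                  else if k mod 6 = 4 then 3 else (1::nat)) mod 2 = 0" unfolding f4k .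
  then have k3: "k mod 6 = 0 \<or> k mod 6 = 3" by (rule g2)
  have j6: "j mod 6 = 5 \<or> j mod 6 = 2" using k3[unfolded kj] by (rule g3)
  have f4j: "fib j mod 4 = (if j mod 6 = 0 then 0 else if j mod 6 = 3 then 2
                  else if j mod 6 = 4 then 3 else 1)" by (rule fib_mod4)
  have "fib j mod 4 = 1" using j6 unfolding f4j by (elim disjE) simp_all
  then have fq: "int (fib j) = 4 * int (fib j div 4) + 1" by (rule g4)
  define q where "q = int (fib j div 4)"
  note fq = fq[folded q_def]
  define e where "e = -(psi ^ k)"
  have kpos: "k \<ge> 1" by fact
  have abse: "\<bar>e\<bar> < 1"
  proof -
    have "\<bar>psi\<bar>^k \<le> \<bar>psi\<bar>^1" using kpos psi_bounds by (intro power_decreasing) auto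
    then show ?thesis unfolding e_def using psi_bounds by (simp add: power_abs)
  qed
  have ege: "e \<ge> - cc"
  proof (cases "even k")
    case True
    then have "k mod 6 = 0" using k3 by (rule g7)
    then have k6: "k \<ge> 6" using kpos by (rule g6)
    have "\<bar>psi\<bar>^k \<le> \<bar>psi\<bar>^6" using k6 psi_bounds by (intro power_decreasing) auto
    moreover have "\<bar>psi\<bar>^k = psi^k" using True by (rule power_even_abs)
    moreover have "\<bar>psi\<bar>^6 = psi^6" by (rule power_even_abs) simp
    ultimately have "psi^k \<le> psi^6" by simp
    then show ?thesis unfolding e_def cc_def by simp
  next
    case False
    then have neg: "psi^k < 0" using psi_bounds by (simp add: odd_power_less_zero)
    show ?thesis unfolding e_def using neg cc_bounds by linarith
  qed
  have mth: "real m * th = real n * th + real (fib j) + e"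
    unfolding m_def e_def th_def using fib_psi[of j] kj by (simp add: algebra_simps)
  define s where "s = sf n"
  have s01: "0 \<le> s" "s < 1" unfolding s_def using sf_bounds by auto
  have nth: "real n * th = of_int (Hf n) + s" unfolding s_def sf_def by simp
  define D where "D = \<lfloor>s + e\<rfloor>"
  have Hm: "Hf m = Hf n + int (fib j) + D"
  proof -
    have "real m * th = (s + e) + of_int (Hf n + int (fib j))" using mth nth by simp
    then have "Hf m = \<lfloor>(s+e) + of_int (Hf n + int (fib j))\<rfloor>" unfolding Hf_def by simp
    also have "\<dots> = D + (Hf n + int (fib j))" unfolding D_def by (rule floor_add_int[symmetric])
    finally show ?thesis by simp
  qed
  have sm: "sf m = s + e - of_int D"
    unfolding sf_def using Hm mth nth by simp
  have Drange: "D = -1 \<or> D = 0 \<or> D = 1"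
  proof -
    have "-1 < s + e" "s + e < 2" using s01 abse by linarith+
    then have "-1 \<le> D" "D \<le> 1" unfolding D_def by linarith+
    then show ?thesis by linarith
  qed
  have nn: "nat ((Hf n div 2) mod 2) = nat ((Hf m div 2) mod 2)" using cheq by blast
  have colbit: "(Hf n div 2) mod 2 = (Hf m div 2) mod 2"
    using nn eq_nat_nat_iff[of "(Hf n div 2) mod 2" "(Hf m div 2) mod 2"] by simp
  show ?thesis
  proof -
    { assume "D = 1"
      then have "Hf m = Hf n + 4*q + 2" using Hm fq by simp
      then have False using colbit by (rule g8) }
    moreover
    { assume D0: "D = 0"
      then have hm: "Hf m = Hf n + 4*q + 1" using Hm fq by simp
      then have "Hf n mod 2 = 0 \<and> Hf m mod 2 = 1" using colbit by (rule g9)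
      moreover have "sf m = s + e" using sm D0 by simp
      then have "sf m \<ge> sf n - cc" using ege s_def by linarith
      ultimately have ?thesis by blast }
    moreover
    { assume D1: "D = -1"
      then have hm: "Hf m = Hf n + 4*q" using Hm fq by simp
      then have "Hf m mod 2 = Hf n mod 2" by (rule g10)
      moreover have "s + e < 0" using D1 unfolding D_def by linarith
      then have "sf n < cc" using ege s_def by linarith
      moreover have "sf m = s + e + 1" using sm D1 by simp
      then have "sf m \<ge> 1 - cc" using ege s01 by linarith
      ultimately have ?thesis by blast }
    ultimately show ?thesis using Drange by blast
  qed
qed

theorem mainTheorem9:
  shows "(\<exists>\<chi>. coloring 4 \<chi> \<and> \<not> mono_diffseq \<chi> fib_set 4) \<and> \<not> accessible 4 fib_set"
proof -
  have col: "coloring 4 chi"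
    unfolding coloring_def chi_def by auto
  have nm: "\<not> mono_diffseq chi fib_set 4"
  proof
    assume "mono_diffseq chi fib_set 4"
    then obtain x c where ds: "diffseq fib_set 4 x"
      and pos: "\<forall>i. 1 \<le> i \<and> i \<le> 4 \<longrightarrow> x i \<ge> 1"
      and cl: "\<forall>i. 1 \<le> i \<and> i \<le> 4 \<longrightarrow> chi (nat (x i)) = c"
      unfolding mono_diffseq_def by blast
    define n where "n i = nat (x i)" for i
    have stp: "Hf (n (i+1)) mod 2 = Hf (n i) mod 2 \<and> sf (n i) < cc \<and> sf (n (i+1)) \<ge> 1 - cc \<or>
         Hf (n i) mod 2 = 0 \<and> Hf (n (i+1)) mod 2 = 1 \<and> sf (n (i+1)) \<ge> sf (n i) - cc"
      if i: "1 \<le> i" "i \<le> 3" for i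
    proof -
      obtain d where d: "d \<in> fib_set" "x (i+1) - x i = int d"
        using ds i unfolding diffseq_def by auto
      obtain k where kd: "d = fib k" "k \<ge> 1" using d(1) unfolding fib_set_def by auto
      have "n (i+1) = n i + fib k" unfolding n_def using d(2) kd pos i by auto
      moreover have "chi (n i) = chi (n (i+1))" unfolding n_def using cl i by simp
      ultimately show ?thesis using step[OF kd(2), of "n i"] by simp
    qed
    have e: "(1::nat)+1 = 2" "(2::nat)+1 = 3" "(3::nat)+1 = 4" by simp_all
    note s1 = stp[of 1, unfolded e] and s2 = stp[of 2, unfolded e] and s3 = stp[of 3, unfolded e]
    show False using s1 s2 s3 cc_bounds by auto
  qed
  have four: "(4::nat) \<ge> 1" by simp
  have "\<not> accessible 4 fib_set"
    unfolding accessible_def using col nm four by blast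
  then show ?thesis using col nm by blast
qed

end
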